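(* Let $s,t$ be real numbers with $t\ge s>0$, and define $K_0=1$, $K_1=t$, $K_2=t^2$, and $K_n = tK_{n-1}+s^2K_{n-2}$ for $n\ge 3$. Then $K_n \le M_n$ for every integer $n\ge 0$.
   Context: For a real number $s$, a positive integer $n$ and a set $P \subseteq \mathbb{R}$, $\mathcal{G}_s^{n\times n}(P)$ denotes the set of all $n\times n$ real upper Hessenberg matrices $A=(a_{ij})$ with $a_{i+1,i} = s$ for $1\le i\le n-1$, $a_{ij}=0$ for $i > j+1$, and $a_{ij}\in P$ for all $i \le j$. For $n\ge 1$, $M_n$ is the maximum of $|\det A|$ over $A\in\mathcal{G}_s^{n\times n}([0,t])$, and $M_0 := 1$. *)

theory Defs
  imports "Jordan_Normal_Form.Determinant"
begin

definition hess_set :: "real \<Rightarrow> nat \<Rightarrow> real set \<Rightarrow> real mat set" where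
  "hess_set s n P = {A. A \<in> carrier_mat n n \<and>
     (\<forall>i<n. \<forall>j<n. (i = j + 1 \<longrightarrow> A $$ (i, j) = s) \<and>
                  (i > j + 1 \<longrightarrow> A $$ (i, j) = 0) \<and>
                  (i \<le> j \<longrightarrow> A $$ (i, j) \<in> P))}"

(* M_n: maximum of |det A| over G_s^{n x n}([0,t]) (maximum exists by compactness,
   so it equals the supremum); M_0 = 1 *)
definition M :: "real \<Rightarrow> real \<Rightarrow> nat \<Rightarrow> real" where
  "M s t n = (if n = 0 then 1 else Sup ((\<lambda>A. \<bar>det A\<bar>) ` hess_set s n {0..t}))"

fun K :: "real \<Rightarrow> real \<Rightarrow> nat \<Rightarrow> real" where
  "K s t 0 = 1"
| "K s t (Suc 0) = t"
| "K s t (Suc (Suc 0)) = t^2"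
| "K s t (Suc (Suc (Suc n))) = t * K s t (Suc (Suc n)) + s^2 * K s t (Suc n)"

end

theory Submission
  imports Defs
begin

definition fe :: "real \<Rightarrow> real \<Rightarrow> nat \<Rightarrow> nat \<Rightarrow> real" where
  "fe s t i j = (if j + 1 = i then s else if i \<le> j \<and> even (j - i) then t else 0)"

definition Dm :: "real \<Rightarrow> real \<Rightarrow> nat \<Rightarrow> real mat" where
  "Dm s t n = mat n n (\<lambda>(i,j). fe s t i j)"

definition Em :: "real \<Rightarrow> real \<Rightarrow> nat \<Rightarrow> real mat" where
  "Em s t n = mat n n (\<lambda>(i,j). if i = 0 then (if odd j then t else 0) else fe s t i j)"

lemma fe_Suc[simp]: "fe s t (Suc i) (Suc j) = fe s t i j"
  unfolding fe_def by auto

lemma del_D00: "mat_delete (Dm s t (Suc n)) 0 0 = Dm s t n"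
  by (rule eq_matI) (auto simp: mat_delete_def Dm_def)

lemma del_D10: "mat_delete (Dm s t (Suc n)) 1 0 = Em s t n"
  by (rule eq_matI) (auto simp: mat_delete_def Dm_def Em_def fe_def)

lemma del_E10: "mat_delete (Em s t (Suc n)) 1 0 = Dm s t n"
  by (rule eq_matI) (auto simp: mat_delete_def Dm_def Em_def fe_def)

lemma expand2:
  fixes A :: "real mat"
  assumes A: "A \<in> carrier_mat (Suc (Suc m)) (Suc (Suc m))"
    and z: "\<And>i. 2 \<le> i \<Longrightarrow> i < Suc (Suc m) \<Longrightarrow> A $$ (i, 0) = 0"
  shows "det A = A $$ (0,0) * det (mat_delete A 0 0) - A $$ (1,0) * det (mat_delete A 1 0)"
proof -
  have "det A = (\<Sum>i<Suc (Suc m). A $$ (i,0) * cofactor A i 0)"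
    by (rule laplace_expansion_column[OF A]) simp
  also have "\<dots> = (\<Sum>i\<in>{0,1}. A $$ (i,0) * cofactor A i 0)"
    by (rule sum.mono_neutral_right) (auto simp: z)
  also have "\<dots> = A $$ (0,0) * det (mat_delete A 0 0) - A $$ (1,0) * det (mat_delete A 1 0)"
    by (simp add: cofactor_def)
  finally show ?thesis .
qed

lemma expand1:
  fixes A :: "real mat"
  assumes A: "A \<in> carrier_mat 1 1"
  shows "det A = A $$ (0,0)"
proof -
  have "det A = (\<Sum>i<1. A $$ (i,0) * cofactor A i 0)"
    by (rule laplace_expansion_column[OF A]) simp
  also have "\<dots> = A $$ (0,0) * det (mat_delete A 0 0)"
    by (simp add: cofactor_def)
  also have "det (mat_delete A 0 0) = 1"
    using A by (simp add: det_def mat_delete_def)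
  finally show ?thesis by simp
qed

lemma det_E: "det (Em s t (Suc (Suc m))) = - s * det (Dm s t (Suc m))"
proof -
  have c: "Em s t (Suc (Suc m)) \<in> carrier_mat (Suc (Suc m)) (Suc (Suc m))" by (simp add: Em_def)
  have "det (Em s t (Suc (Suc m))) = Em s t (Suc (Suc m)) $$ (0,0) * det (mat_delete (Em s t (Suc (Suc m))) 0 0)
     - Em s t (Suc (Suc m)) $$ (1,0) * det (mat_delete (Em s t (Suc (Suc m))) 1 0)"
    by (rule expand2[OF c]) (auto simp: Em_def fe_def)
  then show ?thesis by (simp only: del_E10) (simp add: Em_def fe_def)
qed

lemma det_D: "det (Dm s t (Suc (Suc m))) = t * det (Dm s t (Suc m)) - s * det (Em s t (Suc m))"
proof -
  have c: "Dm s t (Suc (Suc m)) \<in> carrier_mat (Suc (Suc m)) (Suc (Suc m))" by (simp add: Dm_def)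
  have "det (Dm s t (Suc (Suc m))) = Dm s t (Suc (Suc m)) $$ (0,0) * det (mat_delete (Dm s t (Suc (Suc m))) 0 0)
     - Dm s t (Suc (Suc m)) $$ (1,0) * det (mat_delete (Dm s t (Suc (Suc m))) 1 0)"
    by (rule expand2[OF c]) (auto simp: Dm_def fe_def)
  then show ?thesis by (simp only: del_D00 del_D10) (simp add: Dm_def fe_def)
qed

lemma det_D0: "det (Dm s t 0) = 1"
  by (simp add: det_def Dm_def)

lemma det_D1: "det (Dm s t (Suc 0)) = t"
  by (subst expand1) (auto simp: Dm_def fe_def)

lemma det_E1: "det (Em s t (Suc 0)) = 0"
  by (subst expand1) (auto simp: Em_def)

lemma det_D_K: "det (Dm s t n) = K s t n"
proof (induction n rule: less_induct)
  case (less n)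
  show ?case
  proof (cases n)
    case 0 then show ?thesis by (simp add: det_D0)
  next
    case (Suc n1)
    show ?thesis
    proof (cases n1)
      case 0 then show ?thesis using Suc by (simp add: det_D1)
    next
      case (Suc n2)
      show ?thesis
      proof (cases n2)
        case 0 then show ?thesis using Suc \<open>n = Suc n1\<close>
          by (simp add: det_D det_D1 det_E1 power2_eq_square)
      next
        case (Suc n3)
        have "det (Dm s t n) = t * det (Dm s t (Suc (Suc n3))) + s^2 * det (Dm s t (Suc n3))"
          using \<open>n = Suc n1\<close> \<open>n1 = Suc n2\<close> Suc
          by (simp add: det_D det_E power2_eq_square)
        also have "\<dots> = K s t n"
          using less \<open>n = Suc n1\<close> \<open>n1 = Suc n2\<close> Suc by simp
        finally show ?thesis .
      qed
    qed
  qed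
qed

lemma D_in: assumes "0 < s" "s \<le> t" shows "Dm s t n \<in> hess_set s n {0..t}"
  using assms unfolding hess_set_def Dm_def fe_def by auto

lemma det_bound:
  assumes "0 < s" "s \<le> t" and A: "A \<in> hess_set s n {0..t}"
  shows "\<bar>det A\<bar> \<le> fact n * t ^ n"
proof -
  have Ac: "A \<in> carrier_mat n n" and ent: "\<And>i j. i < n \<Longrightarrow> j < n \<Longrightarrow> \<bar>A $$ (i,j)\<bar> \<le> t"
  proof -
    show "A \<in> carrier_mat n n" using A by (simp add: hess_set_def)
    fix i j assume ij: "i < n" "j < n"
    show "\<bar>A $$ (i,j)\<bar> \<le> t"
    proof (cases "i \<le> j")
      case True then show ?thesis using A ij by (auto simp: hess_set_def)
    next
      case False
      then have "i = j + 1 \<or> i > j + 1" by auto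
      then show ?thesis using A ij assms by (auto simp: hess_set_def)
    qed
  qed
  have "\<bar>det A\<bar> = \<bar>\<Sum>p\<in>{p. p permutes {0..<n}}. signof p * (\<Prod>i = 0..<n. A $$ (i, p i))\<bar>"
    using Ac by (simp add: det_def)
  also have "\<dots> \<le> (\<Sum>p\<in>{p. p permutes {0..<n}}. \<bar>signof p * (\<Prod>i = 0..<n. A $$ (i, p i))\<bar>)"
    by (rule sum_abs)
  also have "\<dots> \<le> (\<Sum>p\<in>{p. p permutes {0..<n}}. t ^ n)"
  proof (rule sum_mono)
    fix p assume "p \<in> {p. p permutes {0..<n}}"
    then have pp: "p permutes {0..<n}" by simp
    have "\<bar>signof p * (\<Prod>i = 0..<n. A $$ (i, p i))\<bar> = (\<Prod>i = 0..<n. \<bar>A $$ (i, p i)\<bar>)"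
      by (simp add: abs_mult abs_prod sign_def)
    also have "\<dots> \<le> (\<Prod>i = 0..<n. t)"
      by (rule prod_mono) (use pp ent permutes_in_image in auto)
    finally show "\<bar>signof p * (\<Prod>i = 0..<n. A $$ (i, p i))\<bar> \<le> t ^ n" by simp
  qed
  also have "\<dots> = fact n * t ^ n"
    by (simp add: card_permutations)
  finally show ?thesis .
qed

lemma Knn: "0 \<le> t \<Longrightarrow> 0 \<le> K s t n"
  by (induction s t n rule: K.induct) auto

theorem lemma3p6:
  fixes s t :: real and n :: nat
  assumes "s > 0" and "t \<ge> s"
  shows "K s t n \<le> M s t n"
proof (cases "n = 0")
  case True then show ?thesis by (simp add: M_def)
next
  case False
  have "K s t n = \<bar>det (Dm s t n)\<bar>"
  proof -
    have "K s t n \<ge> 0"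
      using Knn assms by simp
    then show ?thesis by (simp add: det_D_K)
  qed
  also have "\<dots> \<le> Sup ((\<lambda>A. \<bar>det A\<bar>) ` hess_set s n {0..t})"
  proof (rule cSup_upper)
    show "\<bar>det (Dm s t n)\<bar> \<in> (\<lambda>A. \<bar>det A\<bar>) ` hess_set s n {0..t}"
      using D_in[OF assms(1,2)] by blast
    show "bdd_above ((\<lambda>A. \<bar>det A\<bar>) ` hess_set s n {0..t})"
      using det_bound[OF assms(1,2)] by (auto intro!: bdd_aboveI[where M = "fact n * t ^ n"])
  qed
  finally show ?thesis using False by (simp add: M_def)
qed

end
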